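(* Let $n\ge2$, $\alpha\in\mathbb C$, and $T=I+\alpha D\in\mathcal L(\mathcal P_n)$. Let $f\in\mathcal P_n$ have degree at least $2$ and simple roots, and suppose $\tau(f)>2|\alpha|(n-1)+1$. Then $$Z(Tf)\subset\{-\alpha\}+Z(f)+\mathbb D\bigl(\gamma_\alpha/\tau(f)\bigr),$$ where $$\gamma_\alpha=2n\bigl(|\alpha|(n-1)+1\bigr)\left(\Bigl(\frac{|\alpha|(n-1)+2}{|\alpha|(n-1)+1}\Bigr)^{n-1}-1\right)\max\Bigl\{|\alpha|^k\Bigl(1-\frac1k\Bigr):k=2,\dots,n\Bigr\}.$$
   Context: $\mathcal P_n$ is the complex vector space of polynomials of degree at most $n$, $D$ the differentiation operator, $I$ the identity. $Z(f)$ is the root set of $f$; $\mathbb D(r)=\{z\in\mathbb C:|z|\le r\}$ and $A+B=\{u+v:u\in A,v\in B\}$. For $f$ of degree $\ge2$ with at least two distinct roots, $\tau(f):=\min\{|w-v|:w\in Z(f),\ v\in Z(f')\setminus\{w\}\}$. *)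

theory Defs
  imports "HOL-Analysis.Analysis" "HOL-Computational_Algebra.Polynomial"
begin

definition Z :: "complex poly \<Rightarrow> complex set" where
  "Z f = {z. poly f z = 0}"

definition Top :: "complex \<Rightarrow> complex poly \<Rightarrow> complex poly" where
  "Top \<alpha> p = p + smult \<alpha> (pderiv p)"

definition tau :: "complex poly \<Rightarrow> real" where
  "tau f = Min {cmod (w - v) | w v. w \<in> Z f \<and> v \<in> Z (pderiv f) - {w}}"

definition gamma :: "nat \<Rightarrow> complex \<Rightarrow> real" where
  "gamma n \<alpha> = 2 * real n * (cmod \<alpha> * (real n - 1) + 1) *
     (((cmod \<alpha> * (real n - 1) + 2) / (cmod \<alpha> * (real n - 1) + 1)) ^ (n - 1) - 1) *
     Max ((\<lambda>k. cmod \<alpha> ^ k * (1 - 1 / real k)) ` {2..n})"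

end

theory Submission
  imports Defs "HOL-Computational_Algebra.Fundamental_Theorem_Algebra"
begin


lemma lin_shift: "[:- x, 1:] \<circ>\<^sub>p [:u, 1:] = [:u - x, (1::complex):]"
  by (simp add: pcompose_pCons)

lemma coeff_lin_mult: "coeff ([:b::complex, 1:] * R) k = b * coeff R k + (case k of 0 \<Rightarrow> 0 | Suc j \<Rightarrow> coeff R j)"
  by (cases k) simp_all

lemma coeff_shift_bound_aux:
  fixes u :: complex and r :: real
  assumes "r > 0"
  shows "\<forall>P. degree P = n \<longrightarrow> P \<noteq> 0 \<longrightarrow> (\<forall>x. poly P x = 0 \<longrightarrow> r \<le> cmod (u - x)) \<longrightarrow>
     (\<forall>k. cmod (coeff (P \<circ>\<^sub>p [:u,1:]) k) \<le> cmod (poly P u) * real (degree P choose k) / r ^ k)"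
proof (induction n)
  case 0
  show ?case
  proof (intro allI impI)
    fix P :: "complex poly" and k
    assume "degree P = 0"
    then obtain c where P: "P = [:c:]" by (metis degree_eq_zeroE)
    show "cmod (coeff (P \<circ>\<^sub>p [:u,1:]) k) \<le> cmod (poly P u) * real (degree P choose k) / r ^ k"
      using P by (cases k) (auto simp: pcompose_pCons)
  qed
next
  case (Suc m)
  show ?case
  proof (intro allI impI)
    fix P :: "complex poly" and k
    assume dP: "degree P = Suc m" and P0: "P \<noteq> 0" and rt: "\<forall>x. poly P x = 0 \<longrightarrow> r \<le> cmod (u - x)"
    have "\<not> constant (poly P)" using dP by (simp add: constant_degree)
    then obtain x where x: "poly P x = 0" using fundamental_theorem_of_algebra by blast
    then obtain Q where PQ: "P = [:- x, 1:] * Q" by (metis dvdE poly_eq_0_iff_dvd)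
    have Q0: "Q \<noteq> 0" using P0 PQ by auto
    have "degree P = degree [:- x, 1:] + degree Q" unfolding PQ by (rule degree_mult_eq) (use Q0 in auto)
    then have dQ: "degree Q = m" using dP by simp
    have rtQ: "\<forall>y. poly Q y = 0 \<longrightarrow> r \<le> cmod (u - y)" using rt PQ by auto
    have IH: "\<And>k. cmod (coeff (Q \<circ>\<^sub>p [:u,1:]) k) \<le> cmod (poly Q u) * real (m choose k) / r ^ k"
      using Suc.IH dQ Q0 rtQ by blast
    define b where "b = u - x"
    define R where "R = Q \<circ>\<^sub>p [:u,1:]"
    have br: "r \<le> cmod b" using rt x b_def by auto
    have sh: "P \<circ>\<^sub>p [:u,1:] = [:b, 1:] * R"
      unfolding PQ R_def b_def by (simp only: pcompose_mult lin_shift)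
    have pu: "poly P u = b * poly Q u" unfolding PQ b_def by (simp add: algebra_simps)
    show "cmod (coeff (P \<circ>\<^sub>p [:u,1:]) k) \<le> cmod (poly P u) * real (degree P choose k) / r ^ k"
    proof (cases k)
      case 0
      have "cmod (coeff (P \<circ>\<^sub>p [:u,1:]) k) = cmod b * cmod (coeff R 0)"
        using 0 by (simp add: sh coeff_lin_mult norm_mult)
      also have "\<dots> \<le> cmod b * cmod (poly Q u)"
        using IH[of 0] R_def by (simp add: mult_left_mono)
      finally show ?thesis using 0 pu by (simp add: norm_mult)
    next
      case (Suc j)
      have c: "coeff (P \<circ>\<^sub>p [:u,1:]) k = b * coeff R (Suc j) + coeff R j"
        using Suc by (simp add: sh coeff_lin_mult)
      have h1: "cmod (coeff R (Suc j)) \<le> cmod (poly Q u) * real (m choose Suc j) / r ^ Suc j"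
        using IH R_def by blast
      have h2: "cmod (coeff R j) \<le> cmod (poly Q u) * real (m choose j) / r ^ j"
        using IH R_def by blast
      have h3: "cmod (poly Q u) * real (m choose j) / r ^ j \<le> cmod b * (cmod (poly Q u) * real (m choose j) / r ^ Suc j)"
      proof -
        have "cmod (poly Q u) * real (m choose j) / r ^ j = r * (cmod (poly Q u) * real (m choose j) / r ^ Suc j)"
          using \<open>r > 0\<close> by (simp add: field_simps)
        also have "\<dots> \<le> cmod b * (cmod (poly Q u) * real (m choose j) / r ^ Suc j)"
          by (rule mult_right_mono[OF br]) (use \<open>r > 0\<close> in simp)
        finally show ?thesis .
      qed
      have "cmod (coeff (P \<circ>\<^sub>p [:u,1:]) k) \<le> cmod b * cmod (coeff R (Suc j)) + cmod (coeff R j)"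
        unfolding c by (metis norm_mult norm_triangle_ineq)
      also have "\<dots> \<le> cmod b * (cmod (poly Q u) * real (m choose Suc j) / r ^ Suc j) + cmod b * (cmod (poly Q u) * real (m choose j) / r ^ Suc j)"
        using h1 h2 h3 by (smt (verit) mult_left_mono norm_ge_zero)
      also have "\<dots> = cmod (poly P u) * real (Suc m choose k) / r ^ k"
        using Suc pu by (simp add: norm_mult add_divide_distrib distrib_left distrib_right mult.commute mult.left_commute)
      finally show ?thesis using dP by simp
    qed
  qed
qed

lemma coeff_shift_bound:
  fixes P :: "complex poly"
  assumes "P \<noteq> 0" "r > 0" "\<And>x. poly P x = 0 \<Longrightarrow> r \<le> cmod (u - x)"
  shows "cmod (coeff (P \<circ>\<^sub>p [:u,1:]) k) \<le> cmod (poly P u) * real (degree P choose k) / r ^ k"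
  using coeff_shift_bound_aux[OF assms(2), of "degree P" u] assms by blast

lemma logderiv_aux:
  fixes z :: complex
  shows "\<forall>P. degree P = n \<longrightarrow> P \<noteq> 0 \<longrightarrow> poly P z \<noteq> 0 \<longrightarrow>
     (\<exists>xs. length xs = n \<and> (\<forall>x\<in>set xs. poly P x = 0) \<and>
        poly (pderiv P) z / poly P z = sum_list (map (\<lambda>x. 1 / (z - x)) xs))"
proof (induction n)
  case 0
  show ?case
  proof (intro allI impI)
    fix P :: "complex poly"
    assume "degree P = 0"
    then obtain c where P: "P = [:c:]" by (metis degree_eq_zeroE)
    show "\<exists>xs. length xs = 0 \<and> (\<forall>x\<in>set xs. poly P x = 0) \<and>
        poly (pderiv P) z / poly P z = sum_list (map (\<lambda>x. 1 / (z - x)) xs)"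
      by (rule exI[of _ "[]"]) (simp add: P)
  qed
next
  case (Suc m)
  show ?case
  proof (intro allI impI)
    fix P :: "complex poly"
    assume dP: "degree P = Suc m" and P0: "P \<noteq> 0" and Pz: "poly P z \<noteq> 0"
    have "\<not> constant (poly P)" using dP by (simp add: constant_degree)
    then obtain x where x: "poly P x = 0" using fundamental_theorem_of_algebra by blast
    then obtain Q where PQ: "P = [:- x, 1:] * Q" by (metis dvdE poly_eq_0_iff_dvd)
    have Q0: "Q \<noteq> 0" using P0 PQ by auto
    have "degree P = degree [:- x, 1:] + degree Q" unfolding PQ by (rule degree_mult_eq) (use Q0 in auto)
    then have dQ: "degree Q = m" using dP by simp
    have Pz': "poly P z = (z - x) * poly Q z" unfolding PQ by (simp add: algebra_simps)
    have zx: "z - x \<noteq> 0" and Qz: "poly Q z \<noteq> 0" using Pz Pz' by auto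
    obtain xs where xs: "length xs = m" "\<forall>y\<in>set xs. poly Q y = 0"
      "poly (pderiv Q) z / poly Q z = sum_list (map (\<lambda>x. 1 / (z - x)) xs)"
      using Suc.IH dQ Q0 Qz by blast
    have dPz: "poly (pderiv P) z = poly Q z + (z - x) * poly (pderiv Q) z"
    proof -
      have "pderiv P = [:-x,1:] * pderiv Q + Q * pderiv [:-x,1:]" unfolding PQ by (rule pderiv_mult)
      then have "poly (pderiv P) z = poly ([:-x,1:] * pderiv Q + Q * pderiv [:-x,1:]) z" by simp
      then show ?thesis by (simp add: pderiv_pCons algebra_simps)
    qed
    have "poly (pderiv P) z / poly P z = 1 / (z - x) + poly (pderiv Q) z / poly Q z"
      using zx Qz by (simp add: dPz Pz' field_simps)
    then show "\<exists>xs. length xs = Suc m \<and> (\<forall>x\<in>set xs. poly P x = 0) \<and>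
        poly (pderiv P) z / poly P z = sum_list (map (\<lambda>x. 1 / (z - x)) xs)"
      using xs x by (intro exI[of _ "x # xs"]) (auto simp: PQ)
  qed
qed


lemma Re_key:
  fixes b \<alpha> :: complex and c :: real
  assumes "c \<ge> 1" "cmod b > c * cmod \<alpha>"
  shows "Re ((b + of_real c * \<alpha>) / (b - \<alpha>)) > 0"
proof -
  have ba: "b \<noteq> \<alpha>"
  proof
    assume "b = \<alpha>"
    then have "cmod \<alpha> > c * cmod \<alpha>" using assms by simp
    moreover have "c * cmod \<alpha> \<ge> cmod \<alpha>" using assms(1) by (simp add: mult_right_mono[of 1 c, simplified])
    ultimately show False by simp
  qed
  have eq: "Re ((b + of_real c * \<alpha>) * cnj (b - \<alpha>)) = (cmod b)^2 + (c - 1) * Re (b * cnj \<alpha>) - c * (cmod \<alpha>)^2"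
    unfolding cmod_power2 by (simp add: algebra_simps power2_eq_square)
  have r1: "Re (b * cnj \<alpha>) \<ge> - (cmod b * cmod \<alpha>)"
    using complex_Re_le_cmod[of "- (b * cnj \<alpha>)"] by (simp add: norm_mult)
  have "(c - 1) * Re (b * cnj \<alpha>) \<ge> (c - 1) * (- (cmod b * cmod \<alpha>))"
    using r1 assms(1) by (intro mult_left_mono) auto
  moreover have "(cmod b)^2 - (c - 1) * (cmod b * cmod \<alpha>) - c * (cmod \<alpha>)^2 = (cmod b - c * cmod \<alpha>) * (cmod b + cmod \<alpha>)"
    by (simp add: algebra_simps power2_eq_square)
  moreover have "(cmod b - c * cmod \<alpha>) * (cmod b + cmod \<alpha>) > 0"
  proof (rule mult_pos_pos)
    show "cmod b - c * cmod \<alpha> > 0" using assms(2) by simp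
    have "c * cmod \<alpha> \<ge> 0" using assms(1) by simp
    then show "cmod b + cmod \<alpha> > 0" using assms(2) norm_ge_zero[of \<alpha>] by linarith
  qed
  ultimately have pos: "Re ((b + of_real c * \<alpha>) * cnj (b - \<alpha>)) > 0" unfolding eq by linarith
  have "(b + of_real c * \<alpha>) / (b - \<alpha>) = ((b + of_real c * \<alpha>) * cnj (b - \<alpha>)) / of_real ((cmod (b - \<alpha>))^2)"
    by (rule complex_div_cnj)
  then have "Re ((b + of_real c * \<alpha>) / (b - \<alpha>)) = Re ((b + of_real c * \<alpha>) * cnj (b - \<alpha>)) / (cmod (b - \<alpha>))^2"
    by (simp only: Re_divide_of_real)
  then show ?thesis using pos ba by simp
qed

lemma sum_list_affine: "sum_list (map (\<lambda>x. 1 + K * h x) xs) = of_nat (length xs) + K * sum_list (map h xs)" for K :: complex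
  by (induction xs) (simp_all add: algebra_simps)

lemma Re_sum_list_pos: "xs \<noteq> [] \<Longrightarrow> (\<forall>x\<in>set xs. Re (g x) > 0) \<Longrightarrow> Re (sum_list (map g xs)) > 0"
proof (induction xs)
  case Nil then show ?case by simp
next
  case (Cons a xs) then show ?case by (cases "xs = []") (auto intro: add_pos_pos)
qed

lemma localize:
  fixes xs :: "complex list" and \<alpha> u :: complex
  assumes "\<alpha> \<noteq> 0" "length xs = d" "d \<ge> 2"
   "sum_list (map (\<lambda>x. 1/(u - \<alpha> - x)) xs) = -1/\<alpha>"
   "\<forall>x\<in>set xs. u - \<alpha> - x \<noteq> 0"
  shows "\<exists>x\<in>set xs. cmod (u - x) \<le> (real d - 1) * cmod \<alpha>"
proof (rule ccontr)
  assume "\<not> ?thesis"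
  then have far: "\<forall>x\<in>set xs. cmod (u - x) > (real d - 1) * cmod \<alpha>" by force
  define g where "g x = ((u - x) + of_real (real d - 1) * \<alpha>) / ((u - x) - \<alpha>)" for x
  have gpos: "\<forall>x\<in>set xs. Re (g x) > 0"
    using far assms(3) unfolding g_def by (intro ballI Re_key) auto
  have geq: "g x = 1 + (of_nat d * \<alpha>) * (1/(u - \<alpha> - x))" if "x \<in> set xs" for x
  proof -
    have nz: "u - \<alpha> - x \<noteq> 0" using assms(5) that by blast
    have "of_real (real d - 1) = (of_nat d - 1 :: complex)" by simp
    then show ?thesis unfolding g_def using nz by (simp add: field_simps)
  qed
  have "sum_list (map g xs) = sum_list (map (\<lambda>x. 1 + (of_nat d * \<alpha>) * (1/(u - \<alpha> - x))) xs)"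
    using geq by (intro arg_cong[where f=sum_list] map_cong) auto
  also have "\<dots> = of_nat d + (of_nat d * \<alpha>) * (-1/\<alpha>)"
    by (simp only: sum_list_affine assms(2,4))
  also have "\<dots> = 0" using assms(1) by simp
  finally have "sum_list (map g xs) = 0" .
  moreover have "xs \<noteq> []" using assms(2,3) by auto
  ultimately show False using Re_sum_list_pos[OF _ gpos] by simp
qed



lemma binom_bound:
  fixes B \<delta> :: real
  assumes "B > 0" "B \<le> \<delta>" "m \<le> N"
  shows "(\<Sum>j\<le>m. if j = 0 then 0 else real (m choose j) / \<delta> ^ j) \<le> B / \<delta> * ((1 + 1/B) ^ N - 1)"
proof -
  have d0: "\<delta> > 0" using assms by simp
  have "(\<Sum>j\<le>m. if j = 0 then 0 else real (m choose j) / \<delta> ^ j)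
      \<le> (\<Sum>j\<le>m. if j = 0 then 0 else B / \<delta> * (real (m choose j) * (1/B) ^ j))"
  proof (rule sum_mono)
    fix j assume "j \<in> {..m}"
    show "(if j = 0 then 0 else real (m choose j) / \<delta> ^ j) \<le> (if j = 0 then 0 else B / \<delta> * (real (m choose j) * (1/B) ^ j))"
    proof (cases j)
      case 0 then show ?thesis by simp
    next
      case (Suc i)
      have "B ^ i \<le> \<delta> ^ i" using assms by (intro power_mono) auto
      then have "1 / \<delta> ^ i \<le> 1 / B ^ i" using assms by (intro divide_left_mono) auto
      then have "real (m choose j) / \<delta> * (1 / \<delta> ^ i) \<le> real (m choose j) / \<delta> * (1 / B ^ i)"
        using d0 by (intro mult_left_mono) auto
      moreover have "real (m choose j) / \<delta> ^ j = real (m choose j) / \<delta> * (1 / \<delta> ^ i)"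
        using Suc by simp
      ultimately have "real (m choose j) / \<delta> ^ j \<le> real (m choose j) / \<delta> * (1 / B ^ i)" by linarith
      also have "\<dots> = B / \<delta> * (real (m choose j) * (1/B) ^ j)"
        using Suc assms(1) by (simp add: field_simps power_one_over)
      finally show ?thesis using Suc by simp
    qed
  qed
  also have "\<dots> = B / \<delta> * (\<Sum>j\<le>m. if j = 0 then 0 else real (m choose j) * (1/B) ^ j)"
    by (simp add: sum_distrib_left if_distrib cong: if_cong)
  also have "(\<Sum>j\<le>m. if j = 0 then 0 else real (m choose j) * (1/B) ^ j) = (1 + 1/B) ^ m - 1"
  proof -
    have "(1/B + 1) ^ m = (\<Sum>j\<le>m. real (m choose j) * (1/B) ^ j)"
      by (simp add: binomial_ring)
    also have "\<dots> = 1 + (\<Sum>j\<le>m. if j = 0 then 0 else real (m choose j) * (1/B) ^ j)"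
    proof -
      have "(\<Sum>j\<le>m. real (m choose j) * (1/B) ^ j) = (\<Sum>j\<le>m. (if j = 0 then 1 else 0) + (if j = 0 then 0 else real (m choose j) * (1/B) ^ j))"
        by (intro sum.cong) auto
      also have "\<dots> = 1 + (\<Sum>j\<le>m. if j = 0 then 0 else real (m choose j) * (1/B) ^ j)"
        by (simp add: sum.distrib)
      finally show ?thesis .
    qed
    finally show ?thesis by (simp add: add.commute)
  qed
  also have "B / \<delta> * ((1 + 1/B) ^ m - 1) \<le> B / \<delta> * ((1 + 1/B) ^ N - 1)"
    using assms d0 by (intro mult_left_mono power_increasing) auto
  finally show ?thesis by simp
qed


theorem corollary3p3:
  fixes n :: nat and \<alpha> :: complex and f :: "complex poly"
  assumes "n \<ge> 2"
    and "degree f \<le> n"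
    and "degree f \<ge> 2"
    and "rsquarefree f"
    and "tau f > 2 * cmod \<alpha> * (real n - 1) + 1"
  shows "Z (Top \<alpha> f) \<subseteq>
    {- \<alpha> + w + u | w u. w \<in> Z f \<and> cmod u \<le> gamma n \<alpha> / tau f}"
proof
  fix z assume "z \<in> Z (Top \<alpha> f)"
  then have Tz: "poly f z + \<alpha> * poly (pderiv f) z = 0" by (simp add: Z_def Top_def)
  define d where "d = degree f"
  define p where "p = pderiv f"
  define a where "a = cmod \<alpha>"
  define A where "A = a * (real n - 1)"
  define B where "B = A + 1"
  define E where "E = ((A + 2) / (A + 1)) ^ (n - 1) - 1"
  define M where "M = Max ((\<lambda>k. cmod \<alpha> ^ k * (1 - 1 / real k)) ` {2..n})"
  define \<tau> where "\<tau> = tau f"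
  have gam: "gamma n \<alpha> = 2 * real n * B * E * M"
    by (simp add: gamma_def B_def E_def M_def A_def a_def)
  have f0: "f \<noteq> 0" using assms(4) by (simp add: rsquarefree_def)
  have sqf: "\<And>x. poly f x = 0 \<Longrightarrow> poly p x \<noteq> 0" using assms(4) by (simp add: rsquarefree_roots p_def)
  have dp: "degree p = d - 1" by (simp add: p_def d_def degree_pderiv)
  have p0: "p \<noteq> 0"
  proof
    assume "p = 0"
    then have "degree p = 0" by simp
    then show False using dp assms(3) d_def by simp
  qed
  have a0: "a \<ge> 0" by (simp add: a_def)
  have A0: "A \<ge> 0" using a0 assms(1) by (simp add: A_def)
  have \<tau>A: "\<tau> > 2 * A + 1" using assms(5) by (simp add: \<tau>_def A_def a_def mult.assoc)
  have Mge: "\<And>k. 2 \<le> k \<Longrightarrow> k \<le> n \<Longrightarrow> a ^ k * (1 - 1 / real k) \<le> M"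
    unfolding M_def a_def by (intro Max_ge) auto
  have M0: "M \<ge> 0"
  proof -
    have "a ^ 2 * (1 - 1 / real (2::nat)) \<le> M" using Mge assms(1) by blast
    moreover have "a ^ 2 * (1 - 1 / real (2::nat)) \<ge> 0" by simp
    ultimately show ?thesis by linarith
  qed
  have E0: "E \<ge> 0" unfolding E_def using A0 by (simp add: one_le_power)
  have B0: "B > 0" using A0 by (simp add: B_def)
  have \<tau>le: "\<tau> \<le> cmod (w - v)" if "poly f w = 0" "poly p v = 0" for w v
  proof -
    let ?S = "{cmod (w - v) | w v. w \<in> Z f \<and> v \<in> Z (pderiv f) - {w}}"
    have "?S \<subseteq> (\<lambda>(w, v). cmod (w - v)) ` (Z f \<times> Z (pderiv f))" by auto
    moreover have "finite (Z f \<times> Z (pderiv f))"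
      using f0 p0 poly_roots_finite unfolding Z_def p_def by blast
    ultimately have fin: "finite ?S" by (rule finite_subset[OF _ finite_imageI])
    have "v \<noteq> w" using sqf that by auto
    then have "cmod (w - v) \<in> ?S" using that unfolding Z_def p_def by blast
    then show ?thesis unfolding \<tau>_def tau_def using fin by (rule Min_le[rotated])
  qed
  have \<tau>pos: "\<tau> > 0" using \<tau>A A0 by linarith
  have \<gamma>0: "gamma n \<alpha> \<ge> 0" unfolding gam using B0 E0 M0 by simp
  define u where "u = z + \<alpha>"
  show "z \<in> {- \<alpha> + w + u | w u. w \<in> Z f \<and> cmod u \<le> gamma n \<alpha> / tau f}"
  proof (cases "poly f u = 0")
    case True
    have "z = - \<alpha> + u + 0" by (simp add: u_def)
    moreover have "cmod (0::complex) \<le> gamma n \<alpha> / tau f"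
      using \<gamma>0 \<tau>pos \<tau>_def by simp
    ultimately show ?thesis using True unfolding Z_def by blast
  next
    case False
    have \<alpha>0: "\<alpha> \<noteq> 0"
    proof
      assume "\<alpha> = 0"
      then show False using Tz False by (simp add: u_def)
    qed
    have fz: "poly f z \<noteq> 0"
    proof
      assume "poly f z = 0"
      then have "poly p z = 0" using Tz \<alpha>0 by (simp add: p_def)
      then show False using sqf \<open>poly f z = 0\<close> by blast
    qed
    have pz: "poly p z \<noteq> 0" using Tz fz by (auto simp: p_def)
    obtain xs where xs: "length xs = d" "\<forall>x\<in>set xs. poly f x = 0"
      "poly (pderiv f) z / poly f z = sum_list (map (\<lambda>x. 1 / (z - x)) xs)"
      using logderiv_aux[of d z] f0 fz d_def by blast
    have "poly p z / poly f z = - 1 / \<alpha>"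
    proof -
      have "poly f z = - \<alpha> * poly p z" using Tz by (simp add: p_def eq_neg_iff_add_eq_0)
      then show ?thesis using \<alpha>0 pz by (simp add: field_simps)
    qed
    then have sumeq: "sum_list (map (\<lambda>x. 1 / (u - \<alpha> - x)) xs) = - 1 / \<alpha>"
      using xs(3) by (simp add: u_def p_def)
    have nz: "\<forall>x\<in>set xs. u - \<alpha> - x \<noteq> 0" using xs(2) fz by (auto simp: u_def)
    obtain w where w: "w \<in> set xs" "cmod (u - w) \<le> (real d - 1) * cmod \<alpha>"
      using localize[OF \<alpha>0 xs(1) _ sumeq nz] assms(3) d_def by blast
    have fw: "poly f w = 0" using w(1) xs(2) by blast
    have uwA: "cmod (u - w) \<le> A"
    proof -
      have "(real d - 1) * cmod \<alpha> \<le> (real n - 1) * cmod \<alpha>"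
        using assms(2) d_def by (intro mult_right_mono) auto
      then show ?thesis using w(2) by (simp add: A_def a_def mult.commute)
    qed
    define \<delta> where "\<delta> = \<tau> - A"
    have \<delta>B: "B < \<delta>" using \<tau>A by (simp add: \<delta>_def B_def)
    have \<delta>\<tau>: "\<tau> < 2 * \<delta>" using \<tau>A A0 by (simp add: \<delta>_def)
    have \<delta>0: "\<delta> > 0" using \<delta>B B0 by simp
    have crit: "\<delta> \<le> cmod (u - v)" if "poly p v = 0" for v
    proof -
      have "\<tau> \<le> cmod (w - v)" using \<tau>le[OF fw that] .
      also have "\<dots> \<le> cmod (w - u) + cmod (u - v)" by (rule norm_diff_triangle_ineq[of w u u v, simplified])
      also have "cmod (w - u) = cmod (u - w)" by (rule norm_minus_commute)
      finally show ?thesis using uwA by (simp add: \<delta>_def)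
    qed
    have pu: "poly p u \<noteq> 0" using crit[of u] \<delta>0 by auto
    define s where "s = [:u, 1:]"
    define G where "G = f \<circ>\<^sub>p s"
    have dG: "degree G = d" by (simp add: G_def s_def degree_pcompose d_def)
    have pG: "pderiv G = p \<circ>\<^sub>p s" by (simp add: G_def s_def p_def pderiv_pcompose pderiv_pCons)
    define q where "q j = coeff (p \<circ>\<^sub>p s) j" for j
    have qb: "cmod (q j) \<le> cmod (poly p u) * real ((d - 1) choose j) / \<delta> ^ j" for j
      using coeff_shift_bound[OF p0 \<delta>0, of u j] crit unfolding q_def s_def dp by blast
    have gq: "coeff G (Suc j) = q j / of_nat (Suc j)" for j
    proof -
      have "q j = of_nat (Suc j) * coeff G (Suc j)" unfolding q_def pG[symmetric] by (rule coeff_pderiv)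
      then show ?thesis by (simp add: field_simps del: of_nat_Suc)
    qed
    have g0: "coeff G 0 = poly f u"
      by (simp add: poly_0_coeff_0[symmetric] G_def s_def poly_pcompose)
    define e where "e = d - 1"
    have de: "d = Suc e" using assms(3) d_def e_def by simp
    have polyG: "poly G x = coeff G 0 + (\<Sum>j\<le>e. coeff G (Suc j) * x ^ Suc j)" for x
      unfolding poly_altdef dG de by (simp only: sum.atMost_Suc_shift) simp
    have dpG: "degree (pderiv G) = e" using dG de by (simp add: degree_pderiv)
    have polyG': "poly (pderiv G) x = (\<Sum>j\<le>e. q j * x ^ j)" for x
      unfolding poly_altdef dpG by (simp add: q_def pG)
    have eq0: "poly G (- \<alpha>) + \<alpha> * poly (pderiv G) (- \<alpha>) = 0"
    proof -
      have "poly G (- \<alpha>) = poly f z" by (simp add: G_def s_def poly_pcompose u_def)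
      moreover have "poly (pderiv G) (- \<alpha>) = poly (pderiv f) z" by (simp add: pG s_def poly_pcompose u_def p_def)
      ultimately show ?thesis using Tz by simp
    qed
    have termeq: "q j / of_nat (Suc j) * (- \<alpha>) ^ Suc j + \<alpha> * (q j * (- \<alpha>) ^ j)
        = - (of_nat j / of_nat (Suc j) * q j * (- \<alpha>) ^ Suc j)" for j
    proof -
      have "\<alpha> * (q j * (- \<alpha>) ^ j) = - (q j * (- \<alpha>) ^ Suc j)" by simp
      moreover have "(of_nat (Suc j) :: complex) \<noteq> 0" by (simp del: of_nat_Suc)
      ultimately show ?thesis by (simp add: field_simps del: of_nat_Suc) (simp add: algebra_simps)
    qed
    have key: "poly f u = (\<Sum>j\<le>e. of_nat j / of_nat (Suc j) * q j * (- \<alpha>) ^ Suc j)"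
    proof -
      have "0 = coeff G 0 + (\<Sum>j\<le>e. q j / of_nat (Suc j) * (- \<alpha>) ^ Suc j) + \<alpha> * (\<Sum>j\<le>e. q j * (- \<alpha>) ^ j)"
        using eq0 unfolding polyG polyG' gq by simp
      also have "\<dots> = coeff G 0 + (\<Sum>j\<le>e. q j / of_nat (Suc j) * (- \<alpha>) ^ Suc j + \<alpha> * (q j * (- \<alpha>) ^ j))"
        by (simp only: sum_distrib_left sum.distrib add.assoc)
      also have "\<dots> = coeff G 0 - (\<Sum>j\<le>e. of_nat j / of_nat (Suc j) * q j * (- \<alpha>) ^ Suc j)"
        unfolding termeq by (simp add: sum_negf)
      finally show ?thesis using g0 by (simp add: algebra_simps)
    qed
    have termb: "cmod (of_nat j / of_nat (Suc j) * q j * (- \<alpha>) ^ Suc j)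
        \<le> (if j = 0 then 0 else M * cmod (poly p u) * (real (e choose j) / \<delta> ^ j))" if "j \<in> {..e}" for j
    proof (cases "j = 0")
      case True then show ?thesis by simp
    next
      case False
      have "cmod (of_nat j / of_nat (Suc j) * q j * (- \<alpha>) ^ Suc j) = (a ^ Suc j * (1 - 1 / real (Suc j))) * cmod (q j)"
        by (simp add: norm_mult norm_divide norm_power a_def field_simps del: of_nat_Suc) (simp add: algebra_simps)
      also have "\<dots> \<le> M * (cmod (poly p u) * real (e choose j) / \<delta> ^ j)"
      proof (rule mult_mono)
        show "a ^ Suc j * (1 - 1 / real (Suc j)) \<le> M"
          using Mge[of "Suc j"] False that de assms(2) d_def by simp
        show "cmod (q j) \<le> cmod (poly p u) * real (e choose j) / \<delta> ^ j" using qb[of j] de by simp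
      qed (use M0 in auto)
      finally show ?thesis using False by simp
    qed
    have bound_fu: "cmod (poly f u) \<le> M * cmod (poly p u) * (B / \<delta> * E)"
    proof -
      have "cmod (poly f u) \<le> (\<Sum>j\<le>e. cmod (of_nat j / of_nat (Suc j) * q j * (- \<alpha>) ^ Suc j))"
        unfolding key by (rule norm_sum)
      also have "\<dots> \<le> (\<Sum>j\<le>e. if j = 0 then 0 else M * cmod (poly p u) * (real (e choose j) / \<delta> ^ j))"
        by (rule sum_mono[OF termb])
      also have "\<dots> = M * cmod (poly p u) * (\<Sum>j\<le>e. if j = 0 then 0 else real (e choose j) / \<delta> ^ j)"
        by (simp add: sum_distrib_left if_distrib cong: if_cong)
      also have "\<dots> \<le> M * cmod (poly p u) * (B / \<delta> * ((1 + 1 / B) ^ (n - 1) - 1))"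
        using M0 by (intro mult_left_mono binom_bound) (use B0 \<delta>B de assms(2) d_def in auto)
      also have "(1 + 1 / B) ^ (n - 1) - 1 = E"
        unfolding E_def B_def using A0 by (simp add: field_simps)
      finally show ?thesis .
    qed
    define D where "D = (\<lambda>x. cmod (u - x)) ` {x. poly f x = 0}"
    have Dfin: "finite D" unfolding D_def using poly_roots_finite[OF f0] by simp
    have Dne: "D \<noteq> {}" unfolding D_def using fw by blast
    define \<rho> where "\<rho> = Min D"
    obtain w0 where w0: "poly f w0 = 0" "cmod (u - w0) = \<rho>"
      using Min_in[OF Dfin Dne] unfolding \<rho>_def D_def by auto
    have \<rho>le: "\<rho> \<le> cmod (u - x)" if "poly f x = 0" for x
      unfolding \<rho>_def D_def using Dfin that by (intro Min_le) (auto simp: D_def)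
    have \<rho>0: "\<rho> > 0" using w0 False by auto
    have cb: "cmod (coeff G 1) \<le> cmod (poly f u) * real (degree f choose 1) / \<rho> ^ 1"
      unfolding G_def s_def by (rule coeff_shift_bound[OF f0 \<rho>0 \<rho>le])
    have "coeff G 1 = poly p u"
      using gq[of 0] by (simp add: q_def poly_0_coeff_0[symmetric] s_def poly_pcompose)
    then have "cmod (poly p u) \<le> cmod (poly f u) * real d / \<rho>" using cb by (simp add: d_def)
    then have "\<rho> * cmod (poly p u) \<le> cmod (poly f u) * real d" using \<rho>0 by (simp add: field_simps)
    also have "\<dots> \<le> M * cmod (poly p u) * (B / \<delta> * E) * real d"
      by (rule mult_right_mono[OF bound_fu]) simp
    finally have "\<rho> * cmod (poly p u) \<le> (real d * M * B * E / \<delta>) * cmod (poly p u)"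
      by (simp add: field_simps)
    then have \<rho>b: "\<rho> \<le> real d * M * B * E / \<delta>" by (rule mult_right_le_imp_le) (use pu in simp)
    have "real d * M * B * E / \<delta> \<le> real n * M * B * E / \<delta>"
      using assms(2) d_def M0 B0 E0 \<delta>0 by (intro divide_right_mono mult_right_mono) auto
    also have "\<dots> \<le> 2 * real n * B * E * M / \<tau>"
    proof -
      have nn: "real n * M * B * E \<ge> 0" using M0 B0 E0 by simp
      have "real n * M * B * E / \<delta> = 2 * (real n * M * B * E) / (2 * \<delta>)" by simp
      also have "\<dots> \<le> 2 * (real n * M * B * E) / \<tau>"
        using nn \<tau>pos \<delta>\<tau> by (intro divide_left_mono) auto
      finally show ?thesis by (simp add: mult_ac)
    qed
    finally have "cmod (u - w0) \<le> gamma n \<alpha> / tau f"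
      using \<rho>b w0(2) gam \<tau>_def by simp
    moreover have "z = - \<alpha> + w0 + (u - w0)" by (simp add: u_def)
    ultimately show ?thesis using w0(1) unfolding Z_def by blast
  qed
qed

end
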